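(* Let $G$ be a finite connected graph with a cut vertex $v$ and let $G=H_1\vee H_2$ be a decomposition associated to $v$ ($H_1,H_2$ connected subgraphs with $V(H_1)\cap V(H_2)=\{v\}$, $E(H_1)\cap E(H_2)=\emptyset$, $H_1\cup H_2=G$). Let $m,n\ge0$ be integers and let $G^{(m,n)}=H_1^{(m)}\vee H_2^{(n)}$ be the graph obtained by inserting $m$ new vertices in the interior of every edge of $H_1$ and $n$ new vertices in the interior of every edge of $H_2$. Let $\sigma^*_{m,n}:\operatorname{Div}(G)\to\operatorname{Div}(G^{(m,n)})$ be the map with $\sigma^*_{m,n}D(u)=D(u)$ for $u\in V(G)\subset V(G^{(m,n)})$ and $\sigma^*_{m,n}D(u)=0$ at the new vertices. Then: (1) $\sigma^*_{m,n}(\operatorname{Prin}(G))\subset\operatorname{Prin}(G^{(m,n)})$; (2) if $G$ has no loops, then $r_G(D)=r_{G^{(m,n)}}(\sigma^*_{m,n}D)$ for every $D\in\operatorname{Div}(G)$.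
   Context: Graphs are finite and connected, loops and multiple edges allowed. For a graph $G$, $\operatorname{Div}(G)$ is the free abelian group on $V(G)$; $D\ge0$ means all coefficients are nonnegative. Define $(v\cdot w)$ as the number of edges joining $v,w$ if $v\ne w$, and $(v\cdot v)=-\operatorname{val}(v)+2\operatorname{loop}(v)$ (valency with loops counted twice, minus twice the loops, i.e. loops contribute nothing). $T_v=\sum_w(v\cdot w)w$, $\operatorname{Prin}(G)$ is generated by the $T_v$, and $D\sim D'$ iff $D-D'\in\operatorname{Prin}(G)$. The rank $r_G(D)$ is $-1$ if no effective divisor is equivalent to $D$, and otherwise the maximum $k\ge0$ such that for every effective $E$ of degree $k$ some effective divisor is equivalent to $D-E$. *)

theory Defs
  imports Main
begin

text \<open>Finite multigraphs (loops and multiple edges allowed). Each edge has two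
  endpoints; the orientation of the pair is irrelevant.\<close>

record ('v,'e) mgraph =
  verts :: "'v set"
  edges :: "'e set"
  ends  :: "'e \<Rightarrow> 'v \<times> 'v"

definition wf_graph :: "('v,'e) mgraph \<Rightarrow> bool" where
  "wf_graph G \<longleftrightarrow> finite (verts G) \<and> finite (edges G) \<and>
     (\<forall>e\<in>edges G. fst (ends G e) \<in> verts G \<and> snd (ends G e) \<in> verts G)"

definition adj :: "('v,'e) mgraph \<Rightarrow> 'v \<Rightarrow> 'v \<Rightarrow> bool" where
  "adj G x y \<longleftrightarrow> (\<exists>e\<in>edges G. ends G e = (x,y) \<or> ends G e = (y,x))"

definition connected_graph :: "('v,'e) mgraph \<Rightarrow> bool" where
  "connected_graph G \<longleftrightarrow> verts G \<noteq> {} \<and>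
     (\<forall>x\<in>verts G. \<forall>y\<in>verts G. (adj G)\<^sup>*\<^sup>* x y)"

definition loopless :: "('v,'e) mgraph \<Rightarrow> bool" where
  "loopless G \<longleftrightarrow> (\<forall>e\<in>edges G. fst (ends G e) \<noteq> snd (ends G e))"

definition loops :: "('v,'e) mgraph \<Rightarrow> 'v \<Rightarrow> nat" where
  "loops G v = card {e\<in>edges G. ends G e = (v,v)}"

definition val :: "('v,'e) mgraph \<Rightarrow> 'v \<Rightarrow> nat" where
  "val G v = (\<Sum>e\<in>edges G. (if fst (ends G e) = v then 1 else 0)
                          + (if snd (ends G e) = v then 1 else 0))"

definition inter :: "('v,'e) mgraph \<Rightarrow> 'v \<Rightarrow> 'v \<Rightarrow> int" where
  "inter G v w = (if v \<noteq> w
     then int (card {e\<in>edges G. ends G e = (v,w) \<or> ends G e = (w,v)})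
     else - int (val G v) + 2 * int (loops G v))"

definition Div :: "('v,'e) mgraph \<Rightarrow> ('v \<Rightarrow> int) set" where
  "Div G = {D. \<forall>x. x \<notin> verts G \<longrightarrow> D x = 0}"

definition effective :: "('v \<Rightarrow> int) \<Rightarrow> bool" where
  "effective D \<longleftrightarrow> (\<forall>x. D x \<ge> 0)"

definition deg :: "('v,'e) mgraph \<Rightarrow> ('v \<Rightarrow> int) \<Rightarrow> int" where
  "deg G D = (\<Sum>x\<in>verts G. D x)"

definition T :: "('v,'e) mgraph \<Rightarrow> 'v \<Rightarrow> ('v \<Rightarrow> int)" where
  "T G v = (\<lambda>w. if w \<in> verts G then inter G v w else 0)"

definition Prin :: "('v,'e) mgraph \<Rightarrow> ('v \<Rightarrow> int) set" where
  "Prin G = {(\<lambda>w. \<Sum>v\<in>verts G. c v * T G v w) | c. True}"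

definition lin_equiv :: "('v,'e) mgraph \<Rightarrow> ('v \<Rightarrow> int) \<Rightarrow> ('v \<Rightarrow> int) \<Rightarrow> bool" where
  "lin_equiv G D D' \<longleftrightarrow> (\<lambda>x. D x - D' x) \<in> Prin G"

definition rank :: "('v,'e) mgraph \<Rightarrow> ('v \<Rightarrow> int) \<Rightarrow> int" where
  "rank G D = (if \<not> (\<exists>D'\<in>Div G. effective D' \<and> lin_equiv G D' D) then -1
     else int (GREATEST k::nat. \<forall>E\<in>Div G. effective E \<and> deg G E = int k \<longrightarrow>
        (\<exists>D'\<in>Div G. effective D' \<and> lin_equiv G D' (\<lambda>x. D x - E x))))"

definition subgraph_on :: "('v,'e) mgraph \<Rightarrow> 'v set \<Rightarrow> 'e set \<Rightarrow> ('v,'e) mgraph" where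
  "subgraph_on G V E = \<lparr>verts = V, edges = E, ends = ends G\<rparr>"

definition wedge_decomp :: "('v,'e) mgraph \<Rightarrow> 'v \<Rightarrow> 'v set \<Rightarrow> 'e set \<Rightarrow> 'v set \<Rightarrow> 'e set \<Rightarrow> bool" where
  "wedge_decomp G v V1 E1 V2 E2 \<longleftrightarrow>
     V1 \<union> V2 = verts G \<and> V1 \<inter> V2 = {v} \<and> E1 \<union> E2 = edges G \<and> E1 \<inter> E2 = {} \<and>
     E1 \<noteq> {} \<and> E2 \<noteq> {} \<and>
     wf_graph (subgraph_on G V1 E1) \<and> wf_graph (subgraph_on G V2 E2) \<and>
     connected_graph (subgraph_on G V1 E1) \<and> connected_graph (subgraph_on G V2 E2)"

text \<open>Subdivision: edge e is replaced by a path with k e new interior vertices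
  Inr (e,1), ..., Inr (e, k e); old vertices become Inl u.\<close>
definition sub_pt :: "('v,'e) mgraph \<Rightarrow> ('e \<Rightarrow> nat) \<Rightarrow> 'e \<Rightarrow> nat \<Rightarrow> 'v + 'e \<times> nat" where
  "sub_pt G k e j = (if j = 0 then Inl (fst (ends G e))
     else if j = k e + 1 then Inl (snd (ends G e)) else Inr (e, j))"

definition subdivide :: "('v,'e) mgraph \<Rightarrow> ('e \<Rightarrow> nat) \<Rightarrow> ('v + 'e \<times> nat, 'e \<times> nat) mgraph" where
  "subdivide G k = \<lparr>verts = Inl ` verts G \<union> {Inr (e,i) | e i. e \<in> edges G \<and> 1 \<le> i \<and> i \<le> k e},
     edges = {(e,i). e \<in> edges G \<and> i \<le> k e},
     ends = (\<lambda>(e,i). (sub_pt G k e i, sub_pt G k e (i+1)))\<rparr>"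

definition subdiv_mn :: "('v,'e) mgraph \<Rightarrow> 'e set \<Rightarrow> nat \<Rightarrow> nat \<Rightarrow> ('v + 'e \<times> nat, 'e \<times> nat) mgraph" where
  "subdiv_mn G E1 m n = subdivide G (\<lambda>e. if e \<in> E1 then m else n)"

definition sigma_star :: "('v \<Rightarrow> int) \<Rightarrow> ('v + 'e \<times> nat \<Rightarrow> int)" where
  "sigma_star D = (\<lambda>x. case x of Inl u \<Rightarrow> D u | Inr _ \<Rightarrow> 0)"

end

theory Submission
  imports Defs "HOL-Library.FuncSet"
begin



definition dv :: "('v,'e) mgraph \<Rightarrow> ('v \<Rightarrow> int) \<Rightarrow> 'v \<Rightarrow> int" where
  "dv H c = (\<lambda>w. \<Sum>v\<in>verts H. c v * T H v w)"

lemma Prin_dv: "Prin H = range (dv H)"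
  unfolding Prin_def dv_def by auto

definition et :: "('v,'e) mgraph \<Rightarrow> ('v \<Rightarrow> int) \<Rightarrow> 'v \<Rightarrow> 'e \<Rightarrow> int" where
  "et H c w e = (if fst (ends H e) = w then c (snd (ends H e)) - c w else 0)
              + (if snd (ends H e) = w then c (fst (ends H e)) - c w else 0)"

lemma dv_out: "w \<notin> verts H \<Longrightarrow> dv H c w = 0"
  unfolding dv_def T_def by simp

lemma card_sum_ind: "finite A \<Longrightarrow> int (card {x\<in>A. P x}) = (\<Sum>x\<in>A. if P x then 1 else 0)"
  by (simp add: sum.If_cases Int_def)

lemma dv_formula:
  assumes wf: "wf_graph H" and w: "w \<in> verts H"
  shows "dv H c w = (\<Sum>e\<in>edges H. et H c w e)"
proof -
  have fV: "finite (verts H)" and fE: "finite (edges H)"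
    and inV: "\<And>e. e \<in> edges H \<Longrightarrow> fst (ends H e) \<in> verts H \<and> snd (ends H e) \<in> verts H"
    using wf unfolding wf_graph_def by auto
  define h where "h v e = (if v \<noteq> w then
      (if v = fst (ends H e) \<and> snd (ends H e) = w then 1 else 0)
    + (if v = snd (ends H e) \<and> fst (ends H e) = w then 1 else 0)
    else - ((if fst (ends H e) = w then 1 else 0) + (if snd (ends H e) = w then 1 else 0))
         + 2 * (if ends H e = (w,w) then 1 else 0 :: int))" for v e
  have inter_h: "inter H v w = (\<Sum>e\<in>edges H. h v e)" if "v \<in> verts H" for v
  proof (cases "v = w")
    case True
    have "int (val H w) = (\<Sum>e\<in>edges H. (if fst (ends H e) = w then 1 else 0) + (if snd (ends H e) = w then 1 else 0))"
      unfolding val_def of_nat_sum by (rule sum.cong) auto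
    moreover have "int (loops H w) = (\<Sum>e\<in>edges H. if ends H e = (w,w) then 1 else 0)"
      unfolding loops_def using card_sum_ind[OF fE] by simp
    ultimately show ?thesis using True unfolding inter_def h_def
      by (simp add: sum_negf sum_distrib_left sum.distrib[symmetric] sum_subtractf[symmetric])
         (rule sum.cong, auto)
  next
    case False
    have "int (card {e\<in>edges H. ends H e = (v,w) \<or> ends H e = (w,v)})
       = (\<Sum>e\<in>edges H. if ends H e = (v,w) \<or> ends H e = (w,v) then 1 else 0)"
      using card_sum_ind[OF fE] by simp
    moreover have "\<And>e. (if ends H e = (v,w) \<or> ends H e = (w,v) then 1 else 0 :: int) = h v e"
      using False unfolding h_def by (auto simp: prod_eq_iff)
    ultimately show ?thesis using False unfolding inter_def by simp
  qed
  have "dv H c w = (\<Sum>v\<in>verts H. c v * (\<Sum>e\<in>edges H. h v e))"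
    unfolding dv_def T_def using w inter_h by (auto intro!: sum.cong)
  also have "\<dots> = (\<Sum>e\<in>edges H. \<Sum>v\<in>verts H. c v * h v e)"
    by (simp add: sum_distrib_left sum.swap[of _ "edges H"])
  also have "\<dots> = (\<Sum>e\<in>edges H. et H c w e)"
  proof (rule sum.cong[OF refl])
    fix e assume e: "e \<in> edges H"
    obtain p q where pq: "ends H e = (p,q)" by force
    have pV: "p \<in> verts H" and qV: "q \<in> verts H" using inV[OF e] pq by auto
    have "(\<Sum>v\<in>verts H. c v * h v e) = c w * h w e + (\<Sum>v\<in>verts H - {w}. c v * h v e)"
      using fV w by (simp add: sum.remove)
    also have "(\<Sum>v\<in>verts H - {w}. c v * h v e)
       = (\<Sum>v\<in>verts H - {w}. (if v = p then c p * (if q = w then 1 else 0) else 0)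
            + (if v = q then c q * (if p = w then 1 else 0) else 0))"
      by (rule sum.cong) (auto simp: h_def pq)
    also have "\<dots> = (if p \<noteq> w then c p * (if q = w then 1 else 0) else 0)
         + (if q \<noteq> w then c q * (if p = w then 1 else 0) else 0)"
      using fV pV qV by (simp add: sum.distrib)
    finally show "(\<Sum>v\<in>verts H. c v * h v e) = et H c w e"
      unfolding et_def h_def by (auto simp: pq)
  qed
  finally show ?thesis .
qed




lemma dv_add: "dv H (\<lambda>v. a v + b v) w = dv H a w + dv H b w"
  unfolding dv_def by (simp add: algebra_simps sum.distrib)

lemma dv_diff: "dv H (\<lambda>v. a v - b v) w = dv H a w - dv H b w"
  unfolding dv_def by (simp add: algebra_simps sum_subtractf)

lemma dv_neg: "dv H (\<lambda>v. - a v) w = - dv H a w"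
  unfolding dv_def by (simp add: sum_negf)

lemma dv_const: "wf_graph H \<Longrightarrow> dv H (\<lambda>v. k) w = 0"
proof (cases "w \<in> verts H")
  case True
  assume wf: "wf_graph H"
  have "\<And>e. et H (\<lambda>v. k) w e = 0" by (simp add: et_def)
  thus ?thesis using dv_formula[OF wf True] by simp
qed (simp add: dv_out)

lemma dv_add_const: "wf_graph H \<Longrightarrow> dv H (\<lambda>v. a v + k) w = dv H a w"
  using dv_add[of H a "\<lambda>v. k" w] dv_const[of H k w] by simp

lemma dv_cong: "(\<And>v. v \<in> verts H \<Longrightarrow> a v = b v) \<Longrightarrow> dv H a = dv H b"
  unfolding dv_def by (auto intro!: sum.cong)

definition ex_eff :: "('v,'e) mgraph \<Rightarrow> ('v \<Rightarrow> int) \<Rightarrow> bool" where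
  "ex_eff H D \<longleftrightarrow> (\<exists>D'\<in>Div H. effective D' \<and> lin_equiv H D' D)"

lemma lin_equiv_iff: "lin_equiv H A B \<longleftrightarrow> (\<exists>c. \<forall>x. A x = B x + dv H c x)"
proof
  assume "lin_equiv H A B"
  then obtain c where "(\<lambda>x. A x - B x) = dv H c" unfolding lin_equiv_def Prin_dv by auto
  hence "\<forall>x. A x = B x + dv H c x" by (metis add_diff_cancel_left' diff_add_cancel)
  thus "\<exists>c. \<forall>x. A x = B x + dv H c x" by blast
next
  assume "\<exists>c. \<forall>x. A x = B x + dv H c x"
  then obtain c where "\<forall>x. A x = B x + dv H c x" ..
  hence "(\<lambda>x. A x - B x) = dv H c" by auto
  thus "lin_equiv H A B" unfolding lin_equiv_def Prin_dv by auto
qed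

lemma Div_dv: "D \<in> Div H \<Longrightarrow> (\<lambda>x. D x + dv H c x) \<in> Div H"
  unfolding Div_def by (auto simp: dv_out)

lemma ex_eff_simp: assumes "D \<in> Div H" shows "ex_eff H D \<longleftrightarrow> (\<exists>c. \<forall>x. 0 \<le> D x + dv H c x)"
proof
  assume "ex_eff H D"
  then obtain D' c where "effective D'" "\<forall>x. D' x = D x + dv H c x"
    unfolding ex_eff_def lin_equiv_iff by blast
  thus "\<exists>c. \<forall>x. 0 \<le> D x + dv H c x" unfolding effective_def by metis
next
  assume "\<exists>c. \<forall>x. 0 \<le> D x + dv H c x"
  then obtain c where c: "\<forall>x. 0 \<le> D x + dv H c x" ..
  show "ex_eff H D" unfolding ex_eff_def lin_equiv_iff effective_def
  proof (intro bexI conjI)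
    show "(\<lambda>x. D x + dv H c x) \<in> Div H" using Div_dv[OF assms] .
    show "\<forall>x. 0 \<le> D x + dv H c x" using c .
    show "\<exists>c'. \<forall>x. D x + dv H c x = D x + dv H c' x" by blast
  qed
qed

lemma deg_dv: assumes wf: "wf_graph H" shows "deg H (dv H c) = 0"
proof -
  have fV: "finite (verts H)" and fE: "finite (edges H)"
    and inV: "\<And>e. e \<in> edges H \<Longrightarrow> fst (ends H e) \<in> verts H \<and> snd (ends H e) \<in> verts H"
    using wf unfolding wf_graph_def by auto
  have "deg H (dv H c) = (\<Sum>w\<in>verts H. \<Sum>e\<in>edges H. et H c w e)"
    unfolding deg_def using dv_formula[OF wf] by simp
  also have "\<dots> = (\<Sum>e\<in>edges H. \<Sum>w\<in>verts H. et H c w e)" by (rule sum.swap)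
  also have "\<dots> = 0"
  proof (rule sum.neutral, rule ballI)
    fix e assume e: "e \<in> edges H"
    have "(\<Sum>w\<in>verts H. et H c w e) = (\<Sum>w\<in>verts H. (if fst (ends H e) = w then c (snd (ends H e)) - c (fst (ends H e)) else 0)
        + (if snd (ends H e) = w then c (fst (ends H e)) - c (snd (ends H e)) else 0))"
      unfolding et_def by (rule sum.cong) auto
    also have "\<dots> = 0" using inV[OF e] fV by (simp add: sum.distrib)
    finally show "(\<Sum>w\<in>verts H. et H c w e) = 0" .
  qed
  finally show ?thesis .
qed

lemma deg_add: "deg H (\<lambda>x. a x + b x) = deg H a + deg H b"
  unfolding deg_def by (simp add: sum.distrib)
lemma deg_diff: "deg H (\<lambda>x. a x - b x) = deg H a - deg H b"
  unfolding deg_def by (simp add: sum_subtractf)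

lemma eff_le_deg: assumes "finite (verts H)" "effective D" "x \<in> verts H" shows "D x \<le> deg H D"
  unfolding deg_def using assms by (intro member_le_sum) (auto simp: effective_def)

lemma deg_nonneg: assumes "effective D" shows "0 \<le> deg H D"
  unfolding deg_def using assms by (intro sum_nonneg) (auto simp: effective_def)

lemma crossing:
  assumes "(adj H)\<^sup>*\<^sup>* x y" "x \<in> U" "y \<notin> U"
  shows "\<exists>u w. u \<in> U \<and> w \<notin> U \<and> adj H u w"
  using assms by (induction rule: rtranclp_induct) auto

lemma kernel:
  assumes wf: "wf_graph H" and con: "connected_graph H"
    and z: "\<And>w. w \<in> verts H \<Longrightarrow> dv H g w = 0" and x: "x \<in> verts H" and y: "y \<in> verts H"
  shows "g y = g x"
proof -
  have fV: "finite (verts H)" and fE: "finite (edges H)"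
    and inV: "\<And>e. e \<in> edges H \<Longrightarrow> fst (ends H e) \<in> verts H \<and> snd (ends H e) \<in> verts H"
    using wf unfolding wf_graph_def by auto
  define M where "M = Max (g ` verts H)"
  have gM: "g w \<le> M" if "w \<in> verts H" for w using fV that unfolding M_def by auto
  obtain w0 where w0: "w0 \<in> verts H" "g w0 = M"
    using fV x unfolding M_def by (metis (mono_tags, lifting) Max_in empty_iff finite_imageI image_iff image_is_empty)
  define U where "U = {w\<in>verts H. g w = M}"
  have all: "verts H \<subseteq> U"
  proof (rule ccontr)
    assume "\<not> verts H \<subseteq> U"
    then obtain y' where y': "y' \<in> verts H" "y' \<notin> U" by auto
    have "(adj H)\<^sup>*\<^sup>* w0 y'" using con w0 y' unfolding connected_graph_def by auto
    from crossing[OF this, of U] w0 y' obtain u w where uw: "u \<in> U" "w \<notin> U" "adj H u w"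
      unfolding U_def by auto
    then obtain e where e: "e \<in> edges H" "ends H e = (u,w) \<or> ends H e = (w,u)" unfolding adj_def by auto
    have uV: "u \<in> verts H" and gu: "g u = M" using uw unfolding U_def by auto
    have wV: "w \<in> verts H" using e inV[OF e(1)] by auto
    have gw: "g w < M" using gM[OF wV] uw wV unfolding U_def by auto
    have le: "et H g u e' \<le> 0" if "e' \<in> edges H" for e'
      using gM inV[OF that] gu unfolding et_def by auto
    have wu: "w \<noteq> u" using uw by auto
    have lt: "et H g u e < 0"
    proof -
      obtain p q where pq: "ends H e = (p,q)" by force
      show ?thesis using e(2) gu gw wu unfolding et_def pq by auto
    qed
    have "(\<Sum>e'\<in>edges H. et H g u e') < 0"
      using sum_strict_mono_ex1[of "edges H" "et H g u" "\<lambda>_. 0"] fE le lt e(1) by auto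
    with z[OF uV] dv_formula[OF wf uV] show False by simp
  qed
  thus ?thesis using x y unfolding U_def by auto
qed




definition ind :: "'v set \<Rightarrow> 'v \<Rightarrow> int" where "ind U = (\<lambda>w. if w \<in> U then 1 else 0)"

definition reduced :: "('v,'e) mgraph \<Rightarrow> 'v \<Rightarrow> ('v \<Rightarrow> int) \<Rightarrow> bool" where
  "reduced H x C \<longleftrightarrow> C \<in> Div H \<and> effective C \<and>
     (\<forall>U. U \<subseteq> verts H \<longrightarrow> U \<noteq> {} \<longrightarrow> x \<notin> U \<longrightarrow> \<not> effective (\<lambda>w. C w + dv H (ind U) w))"

lemma max_lemma:
  assumes wf: "wf_graph H" and x: "x \<in> verts H" and red: "reduced H x C"
    and eff: "\<forall>w. 0 \<le> C w + dv H f w"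
  shows "dv H f x \<le> 0"
proof -
  have fV: "finite (verts H)" and fE: "finite (edges H)"
    and inV: "\<And>e. e \<in> edges H \<Longrightarrow> fst (ends H e) \<in> verts H \<and> snd (ends H e) \<in> verts H"
    using wf unfolding wf_graph_def by auto
  define M where "M = Max (f ` verts H)"
  have fM: "f w \<le> M" if "w \<in> verts H" for w using fV that unfolding M_def by auto
  obtain w0 where w0: "w0 \<in> verts H" "f w0 = M"
    using fV x unfolding M_def by (metis (mono_tags, lifting) Max_in empty_iff finite_imageI image_iff image_is_empty)
  define U where "U = {w\<in>verts H. f w = M}"
  have C0: "\<forall>w. 0 \<le> C w" using red unfolding reduced_def effective_def by auto
  have xU: "x \<in> U"
  proof (rule ccontr)
    assume xn: "x \<notin> U"
    have "effective (\<lambda>w. C w + dv H (ind U) w)" unfolding effective_def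
    proof
      fix w
      show "0 \<le> C w + dv H (ind U) w"
      proof (cases "w \<in> verts H")
        case False thus ?thesis using C0 dv_out[OF False] by simp
      next
        case wV: True
        show ?thesis
        proof (cases "w \<in> U")
          case True
          have "et H f w e \<le> et H (ind U) w e" if e: "e \<in> edges H" for e
          proof -
            have le: "f o' - f w \<le> ind U o' - ind U w" if "o' \<in> verts H" for o'
              using that True fM[OF that] unfolding U_def ind_def by auto
            show ?thesis using le inV[OF e] unfolding et_def by auto
          qed
          hence "dv H f w \<le> dv H (ind U) w" using dv_formula[OF wf wV] by (simp add: sum_mono)
          thus ?thesis using eff by (metis add_le_cancel_left order_trans)
        next
          case False
          have "0 \<le> et H (ind U) w e" if e: "e \<in> edges H" for e
            using False unfolding et_def ind_def by auto
          hence "0 \<le> dv H (ind U) w" using dv_formula[OF wf wV] by (simp add: sum_nonneg)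
          thus ?thesis using C0 by (simp add: add_nonneg_nonneg)
        qed
      qed
    qed
    moreover have "U \<subseteq> verts H" "U \<noteq> {}" using w0 unfolding U_def by auto
    ultimately show False using red xn unfolding reduced_def by blast
  qed
  have "et H f x e \<le> 0" if e: "e \<in> edges H" for e
    using xU fM inV[OF e] unfolding U_def et_def by auto
  thus ?thesis using dv_formula[OF wf x] by (simp add: sum_nonpos)
qed

lemma finite_bounded:
  assumes "finite V"
  shows "finite {D::'a \<Rightarrow> int. (\<forall>w. w \<notin> V \<longrightarrow> D w = 0) \<and> (\<forall>w. 0 \<le> D w \<and> D w \<le> d)}"
proof -
  have "{D::'a \<Rightarrow> int. (\<forall>w. w \<notin> V \<longrightarrow> D w = 0) \<and> (\<forall>w. 0 \<le> D w \<and> D w \<le> d)}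
     \<subseteq> (\<lambda>h w. if w \<in> V then h w else 0) ` (PiE V (\<lambda>_. {0..d}))"
  proof
    fix D :: "'a \<Rightarrow> int" assume D: "D \<in> {D. (\<forall>w. w \<notin> V \<longrightarrow> D w = 0) \<and> (\<forall>w. 0 \<le> D w \<and> D w \<le> d)}"
    have "D = (\<lambda>w. if w \<in> V then restrict D V w else 0)" using D by (auto simp: fun_eq_iff restrict_apply)
    moreover have "restrict D V \<in> PiE V (\<lambda>_. {0..d})" using D by auto
    ultimately show "D \<in> (\<lambda>h w. if w \<in> V then h w else 0) ` (PiE V (\<lambda>_. {0..d}))" by blast
  qed
  moreover have "finite (PiE V (\<lambda>_. {0..d::int}))" using assms by (simp add: finite_PiE)
  ultimately show ?thesis by (meson finite_imageI finite_subset)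
qed

lemma reduced_exists:
  assumes wf: "wf_graph H" and con: "connected_graph H" and x: "x \<in> verts H"
    and Q: "Q \<in> Div H" and ee: "ex_eff H Q"
  shows "\<exists>C. reduced H x C \<and> (\<exists>c. \<forall>w. C w = Q w + dv H c w)"
proof -
  have fV: "finite (verts H)" using wf unfolding wf_graph_def by auto
  obtain c where c: "\<forall>w. 0 \<le> Q w + dv H c w" using ee ex_eff_simp[OF Q] by auto
  define C0 where "C0 = (\<lambda>w. Q w + dv H c w)"
  have C0Div: "C0 \<in> Div H" unfolding C0_def using Div_dv[OF Q] .
  define S where "S = {f. (\<forall>w. w \<notin> verts H \<longrightarrow> f w = 0) \<and> f x = 0 \<and> (\<forall>w. 0 \<le> f w) \<and> (\<forall>w. 0 \<le> C0 w + dv H f w)}"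
  define \<Phi> where "\<Phi> f = (\<lambda>w. C0 w + dv H f w)" for f
  define d where "d = deg H C0"
  have inj: "inj_on \<Phi> S"
  proof
    fix f1 f2 assume f1: "f1 \<in> S" and f2: "f2 \<in> S" and eq: "\<Phi> f1 = \<Phi> f2"
    have z: "dv H (\<lambda>v. f1 v - f2 v) w = 0" for w
      using fun_cong[OF eq, of w] unfolding \<Phi>_def dv_diff by simp
    show "f1 = f2"
    proof
      fix y show "f1 y = f2 y"
      proof (cases "y \<in> verts H")
        case True
        have "f1 y - f2 y = f1 x - f2 x" using kernel[OF wf con _ x True, of "\<lambda>v. f1 v - f2 v"] z by simp
        thus ?thesis using f1 f2 unfolding S_def by simp
      next
        case False thus ?thesis using f1 f2 unfolding S_def by simp
      qed
    qed
  qed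
  have img: "\<Phi> ` S \<subseteq> {D. (\<forall>w. w \<notin> verts H \<longrightarrow> D w = 0) \<and> (\<forall>w. 0 \<le> D w \<and> D w \<le> d)}"
  proof
    fix D assume "D \<in> \<Phi> ` S"
    then obtain f where f: "f \<in> S" and D: "D = \<Phi> f" by auto
    have eff: "\<forall>w. 0 \<le> D w" using f D unfolding S_def \<Phi>_def by auto
    have degD: "deg H D = d" unfolding D \<Phi>_def d_def deg_add deg_dv[OF wf] by simp
    have out: "\<forall>w. w \<notin> verts H \<longrightarrow> D w = 0" using C0Div unfolding D \<Phi>_def Div_def by (auto simp: dv_out)
    have "D w \<le> d" for w
    proof (cases "w \<in> verts H")
      case True thus ?thesis using eff_le_deg[OF fV _ True, of D] eff degD by (simp add: effective_def)
    next
      case False thus ?thesis using out deg_nonneg[of D H] eff degD by (simp add: effective_def)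
    qed
    thus "D \<in> {D. (\<forall>w. w \<notin> verts H \<longrightarrow> D w = 0) \<and> (\<forall>w. 0 \<le> D w \<and> D w \<le> d)}" using eff out by auto
  qed
  have finS: "finite S"
    using finite_imageD[OF finite_subset[OF img finite_bounded[OF fV]] inj] .
  have zS: "(\<lambda>_. 0) \<in> S" unfolding S_def using c dv_const[OF wf, of 0] unfolding C0_def by auto
  define M where "M = Max ((\<lambda>f. sum f (verts H)) ` S)"
  obtain f where fS: "f \<in> S" and fM: "sum f (verts H) = M"
    using finS zS unfolding M_def by (metis (mono_tags, lifting) Max_in empty_iff finite_imageI image_iff image_is_empty)
  have gM: "sum g (verts H) \<le> M" if "g \<in> S" for g using finS that unfolding M_def by auto
  have red: "reduced H x (\<Phi> f)"
    unfolding reduced_def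
  proof (intro conjI allI impI)
    show "\<Phi> f \<in> Div H" unfolding \<Phi>_def using Div_dv[OF C0Div] .
    show "effective (\<Phi> f)" using fS unfolding S_def \<Phi>_def effective_def by auto
    fix U assume U: "U \<subseteq> verts H" "U \<noteq> {}" "x \<notin> U"
    show "\<not> effective (\<lambda>w. \<Phi> f w + dv H (ind U) w)"
    proof
      assume e: "effective (\<lambda>w. \<Phi> f w + dv H (ind U) w)"
      define g where "g = (\<lambda>w. f w + ind U w)"
      have "g \<in> S" using fS U e unfolding S_def g_def \<Phi>_def effective_def ind_def
        by (auto simp: dv_add add.assoc)
      moreover have "sum g (verts H) = M + int (card U)"
      proof -
        have "sum (ind U) (verts H) = int (card U)"
          unfolding ind_def using U fV by (simp add: sum.If_cases Int_absorb1)
        thus ?thesis unfolding g_def using fM by (simp add: sum.distrib)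
      qed
      moreover have "card U > 0" using U fV by (meson card_gt_0_iff finite_subset)
      ultimately show False using gM by fastforce
    qed
  qed
  moreover have "\<forall>w. \<Phi> f w = Q w + dv H (\<lambda>v. c v + f v) w"
    unfolding \<Phi>_def C0_def dv_add by simp
  ultimately show ?thesis by blast
qed




lemma step_up: "\<not> P 0 \<Longrightarrow> P (j::nat) \<Longrightarrow> \<exists>i. 0 < i \<and> i \<le> j \<and> P i \<and> \<not> P (i - 1)"
proof (induction j)
  case 0 thus ?case by simp
next
  case (Suc j)
  show ?case
  proof (cases "P j")
    case True with Suc show ?thesis by (metis le_SucI)
  next
    case False with Suc show ?thesis by (intro exI[of _ "Suc j"]) auto
  qed
qed

lemma step_down: "P (j::nat) \<Longrightarrow> \<not> P k \<Longrightarrow> j \<le> k \<Longrightarrow> \<exists>i. j \<le> i \<and> i < k \<and> P i \<and> \<not> P (Suc i)"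
proof (induction k)
  case 0 thus ?case by simp
next
  case (Suc k)
  show ?case
  proof (cases "P k")
    case True with Suc show ?thesis by (intro exI[of _ k]) (auto simp: le_Suc_eq)
  next
    case False with Suc show ?thesis by (metis le_Suc_eq less_Suc_eq)
  qed
qed

lemma dv_on: assumes wf: "wf_graph H" and w: "w \<in> verts H" and F: "F \<subseteq> edges H"
  and z: "\<And>e. e \<in> edges H \<Longrightarrow> e \<notin> F \<Longrightarrow> et H c w e = 0"
  shows "dv H c w = (\<Sum>e\<in>F. et H c w e)"
proof -
  have fE: "finite (edges H)" using wf unfolding wf_graph_def by auto
  show ?thesis unfolding dv_formula[OF wf w]
    by (rule sum.mono_neutral_right[OF fE F]) (use z in auto)
qed

locale gpath =
  fixes H :: "('v,'e) mgraph" and p :: "nat \<Rightarrow> 'v" and \<epsilon> :: "nat \<Rightarrow> 'e" and K :: nat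
  assumes wf: "wf_graph H" and con: "connected_graph H"
  and pV: "\<And>i. i \<le> Suc K \<Longrightarrow> p i \<in> verts H"
  and pinj: "inj_on p {0..Suc K}"
  and epsE: "\<And>i. i \<le> K \<Longrightarrow> \<epsilon> i \<in> edges H"
  and epsends: "\<And>i. i \<le> K \<Longrightarrow> ends H (\<epsilon> i) = (p i, p (Suc i)) \<or> ends H (\<epsilon> i) = (p (Suc i), p i)"
  and interior: "\<And>i e. 1 \<le> i \<Longrightarrow> i \<le> K \<Longrightarrow> e \<in> edges H \<Longrightarrow>
        fst (ends H e) = p i \<or> snd (ends H e) = p i \<Longrightarrow> e = \<epsilon> (i-1) \<or> e = \<epsilon> i"
begin

lemma p_eq: "i \<le> Suc K \<Longrightarrow> i' \<le> Suc K \<Longrightarrow> p i = p i' \<longleftrightarrow> i = i'"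
  using pinj unfolding inj_on_def by auto

lemma dv_interior:
  assumes i: "1 \<le> i" "i \<le> K"
  shows "dv H c (p i) = c (p (i-1)) + c (p (Suc i)) - 2 * c (p i)"
proof -
  have pi: "p i \<in> verts H" using pV i by auto
  have ne1: "p (i-1) \<noteq> p i" and ne2: "p (Suc i) \<noteq> p i" and ne3: "p (i-1) \<noteq> p (Suc i)"
    using p_eq i by auto
  have e1: "ends H (\<epsilon> (i-1)) = (p (i-1), p i) \<or> ends H (\<epsilon> (i-1)) = (p i, p (i-1))"
    using epsends[of "i-1"] i by auto
  have e2: "ends H (\<epsilon> i) = (p i, p (Suc i)) \<or> ends H (\<epsilon> i) = (p (Suc i), p i)"
    using epsends[of i] i by auto
  have dist: "\<epsilon> (i-1) \<noteq> \<epsilon> i" using e1 e2 ne1 ne2 ne3 by auto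
  have "dv H c (p i) = (\<Sum>e\<in>{\<epsilon> (i-1), \<epsilon> i}. et H c (p i) e)"
  proof (rule dv_on[OF wf pi])
    show "{\<epsilon> (i-1), \<epsilon> i} \<subseteq> edges H" using epsE i by auto
    fix e assume "e \<in> edges H" "e \<notin> {\<epsilon> (i-1), \<epsilon> i}"
    thus "et H c (p i) e = 0" using interior[OF i, of e] unfolding et_def by auto
  qed
  also have "\<dots> = et H c (p i) (\<epsilon> (i-1)) + et H c (p i) (\<epsilon> i)" using dist by simp
  also have "et H c (p i) (\<epsilon> (i-1)) = c (p (i-1)) - c (p i)"
    using e1 ne1 unfolding et_def by auto
  also have "et H c (p i) (\<epsilon> i) = c (p (Suc i)) - c (p i)"
    using e2 ne2 unfolding et_def by auto
  finally show ?thesis by simp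
qed

end




lemma Div_minus_ind: "Q \<in> Div H \<Longrightarrow> y \<in> verts H \<Longrightarrow> (\<lambda>w. Q w - ind {y} w) \<in> Div H"
  unfolding Div_def ind_def by auto

lemma no_chip:
  assumes wf: "wf_graph H" and y: "y \<in> verts H" and red: "reduced H y C" and Cy: "C y = 0"
    and C: "\<forall>w. C w = Q w + dv H c0 w" and Q: "Q \<in> Div H"
    and ee: "ex_eff H (\<lambda>w. Q w - ind {y} w)"
  shows False
proof -
  obtain b where b: "\<forall>w. 0 \<le> Q w - ind {y} w + dv H b w"
    using ee ex_eff_simp[OF Div_minus_ind[OF Q y]] by auto
  have eq: "C w + dv H (\<lambda>v. b v - c0 v) w = Q w + dv H b w" for w
    using C by (simp add: dv_diff)
  have "\<forall>w. 0 \<le> C w + dv H (\<lambda>v. b v - c0 v) w"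
  proof
    fix w have "0 \<le> ind {y} w" unfolding ind_def by simp
    thus "0 \<le> C w + dv H (\<lambda>v. b v - c0 v) w" using b[rule_format, of w] eq[of w] by linarith
  qed
  from max_lemma[OF wf y red this] have "dv H (\<lambda>v. b v - c0 v) y \<le> 0" .
  moreover have "1 \<le> C y + dv H (\<lambda>v. b v - c0 v) y" using b[rule_format, of y] eq[of y] unfolding ind_def by simp
  ultimately show False using Cy by simp
qed

context gpath begin

lemma fire_mid:
  assumes red: "reduced H (p j) C" and j: "1 \<le> j" "j \<le> K"
    and ia: "ia < j" and ib: "j < ib" "ib \<le> Suc K" and Cy: "1 \<le> C (p ia)" and Cz: "1 \<le> C (p ib)"
  shows False
proof -
  have fE: "finite (edges H)"
    and inV: "\<And>e. e \<in> edges H \<Longrightarrow> fst (ends H e) \<in> verts H \<and> snd (ends H e) \<in> verts H"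
    using wf unfolding wf_graph_def by auto
  define S where "S = p ` {ia<..<ib}"
  define U where "U = verts H - S"
  define y where "y = p ia"
  define z where "z = p ib"
  have C0: "\<forall>w. 0 \<le> C w" using red unfolding reduced_def effective_def by auto
  have yz: "y \<noteq> z" unfolding y_def z_def using p_eq ia ib j by auto
  have yU: "y \<in> U" unfolding U_def S_def y_def using pV p_eq ia ib j by auto
  have zU: "z \<in> U" unfolding U_def S_def z_def using pV p_eq ia ib j by auto
  have xS: "p j \<in> S" unfolding S_def using ia ib by auto
  have K1: "(e = \<epsilon> ia \<and> w = y) \<or> (e = \<epsilon> (ib - 1) \<and> w = z)"
    if e: "e \<in> edges H" and w: "w \<in> U" and o: "o' \<in> S" and eo: "ends H e = (w, o') \<or> ends H e = (o', w)" for e w o'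
  proof -
    obtain i where i: "ia < i" "i < ib" and oi: "o' = p i" using o unfolding S_def by auto
    have i1: "1 \<le> i" "i \<le> K" using i ib by auto
    have "e = \<epsilon> (i-1) \<or> e = \<epsilon> i" using interior[OF i1 e] eo oi by auto
    moreover have wo: "w \<noteq> o'" using w o unfolding U_def by auto
    moreover
    { assume ee: "e = \<epsilon> (i-1)"
      have "ends H e = (p (i-1), p i) \<or> ends H e = (p i, p (i-1))" using epsends[of "i-1"] i1 ee by auto
      hence wi: "w = p (i-1)" using eo wo oi by auto
      have "i - 1 = ia"
      proof (rule ccontr)
        assume "i - 1 \<noteq> ia" hence "w \<in> S" unfolding S_def wi using i by (intro imageI) auto
        thus False using w unfolding U_def by auto
      qed
      hence ?thesis using ee wi unfolding y_def by auto }
    moreover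
    { assume ee: "e = \<epsilon> i"
      have "ends H e = (p i, p (Suc i)) \<or> ends H e = (p (Suc i), p i)" using epsends[of i] i1 ee by auto
      hence wi: "w = p (Suc i)" using eo wo oi by auto
      have "Suc i = ib"
      proof (rule ccontr)
        assume "Suc i \<noteq> ib" hence "w \<in> S" unfolding S_def wi using i by (intro imageI) auto
        thus False using w unfolding U_def by auto
      qed
      hence ?thesis using ee wi unfolding z_def by auto }
    ultimately show ?thesis by blast
  qed
  have eff: "effective (\<lambda>w. C w + dv H (ind U) w)" unfolding effective_def
  proof
    fix w
    show "0 \<le> C w + dv H (ind U) w"
    proof (cases "w \<in> verts H")
      case False thus ?thesis using C0 dv_out[OF False] by simp
    next
      case wV: True
      show ?thesis
      proof (cases "w \<in> U")
        case False
        have "0 \<le> et H (ind U) w e" if e: "e \<in> edges H" for e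
          using False unfolding et_def ind_def by auto
        hence "0 \<le> dv H (ind U) w" using dv_formula[OF wf wV] by (simp add: sum_nonneg)
        thus ?thesis using C0 by (simp add: add_nonneg_nonneg)
      next
        case True
        define lb where "lb e = - (if e = \<epsilon> ia then (if w = y then 1 else 0) else 0)
                     - (if e = \<epsilon> (ib - 1) then (if w = z then 1 else 0) else 0 :: int)" for e
        have tm: "lb e \<le> et H (ind U) w e" if e: "e \<in> edges H" for e
        proof -
          obtain a b where ab: "ends H e = (a,b)" by force
          have aV: "a \<in> verts H" and bV: "b \<in> verts H" using inV[OF e] ab by auto
          have lb0: "lb e \<le> 0" unfolding lb_def by auto
          show ?thesis
          proof (cases "a = w")
            case aw: True
            show ?thesis
            proof (cases "b = w")
              case True thus ?thesis using aw lb0 unfolding et_def ab by simp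
            next
              case bw: False
              show ?thesis
              proof (cases "b \<in> U")
                case True thus ?thesis using aw bw lb0 \<open>w \<in> U\<close> unfolding et_def ab ind_def by simp
              next
                case False
                hence "b \<in> S" using bV unfolding U_def by auto
                from K1[OF e \<open>w \<in> U\<close> this] ab aw have "(e = \<epsilon> ia \<and> w = y) \<or> (e = \<epsilon> (ib - 1) \<and> w = z)" by auto
                hence "lb e \<le> -1" unfolding lb_def by auto
                thus ?thesis using aw bw False \<open>w \<in> U\<close> unfolding et_def ab ind_def by simp
              qed
            qed
          next
            case aw: False
            show ?thesis
            proof (cases "b = w")
              case bw: False thus ?thesis using aw lb0 unfolding et_def ab by simp
            next
              case bw: True
              show ?thesis
              proof (cases "a \<in> U")
                case True thus ?thesis using aw bw lb0 \<open>w \<in> U\<close> unfolding et_def ab ind_def by simp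
              next
                case False
                hence "a \<in> S" using aV unfolding U_def by auto
                from K1[OF e \<open>w \<in> U\<close> this] ab bw have "(e = \<epsilon> ia \<and> w = y) \<or> (e = \<epsilon> (ib - 1) \<and> w = z)" by auto
                hence "lb e \<le> -1" unfolding lb_def by auto
                thus ?thesis using aw bw False \<open>w \<in> U\<close> unfolding et_def ab ind_def by simp
              qed
            qed
          qed
        qed
        have e1: "\<epsilon> ia \<in> edges H" and e2: "\<epsilon> (ib - 1) \<in> edges H" using epsE ia ib j by auto
        have "(\<Sum>e\<in>edges H. lb e) = - (if w = y then 1 else 0) - (if w = z then 1 else 0)"
          unfolding lb_def using fE e1 e2 by (simp add: sum_subtractf sum_negf)
        moreover have "(\<Sum>e\<in>edges H. lb e) \<le> dv H (ind U) w"
          using dv_formula[OF wf wV] tm by (simp add: sum_mono)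
        ultimately show ?thesis using C0[rule_format, of w] Cy Cz yz unfolding y_def z_def
          by (cases "w = p ia"; cases "w = p ib") auto
      qed
    qed
  qed
  moreover have "U \<subseteq> verts H" "U \<noteq> {}" "p j \<notin> U" using yU xS unfolding U_def by auto
  ultimately show False using red unfolding reduced_def by blast
qed

lemma left_zero:
  assumes red: "reduced H (p j) C" and j: "1 \<le> j" "j \<le> K" and z: "\<forall>i\<le>j. C (p i) = 0"
  shows "reduced H (p 0) C"
  unfolding reduced_def
proof (intro conjI allI impI)
  show "C \<in> Div H" "effective C" using red unfolding reduced_def by auto
  fix U assume U: "U \<subseteq> verts H" "U \<noteq> {}" "p 0 \<notin> U"
  show "\<not> effective (\<lambda>w. C w + dv H (ind U) w)"
  proof (cases "p j \<in> U")
    case False thus ?thesis using red U unfolding reduced_def by blast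
  next
    case True
    obtain i where i: "0 < i" "i \<le> j" "p i \<in> U" "p (i-1) \<notin> U"
      using step_up[of "\<lambda>i. p i \<in> U" j] U True by auto
    have i1: "1 \<le> i" "i \<le> K" using i j by auto
    have "dv H (ind U) (p i) = ind U (p (i-1)) + ind U (p (Suc i)) - 2 * ind U (p i)"
      using dv_interior[OF i1] .
    hence "dv H (ind U) (p i) \<le> -1" using i unfolding ind_def by auto
    moreover have "C (p i) = 0" using z i by auto
    ultimately have "C (p i) + dv H (ind U) (p i) < 0" by linarith
    thus ?thesis unfolding effective_def by (meson not_le)
  qed
qed

lemma right_zero:
  assumes red: "reduced H (p j) C" and j: "1 \<le> j" "j \<le> K" and z: "\<forall>i. j \<le> i \<and> i \<le> Suc K \<longrightarrow> C (p i) = 0"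
  shows "reduced H (p (Suc K)) C"
  unfolding reduced_def
proof (intro conjI allI impI)
  show "C \<in> Div H" "effective C" using red unfolding reduced_def by auto
  fix U assume U: "U \<subseteq> verts H" "U \<noteq> {}" "p (Suc K) \<notin> U"
  show "\<not> effective (\<lambda>w. C w + dv H (ind U) w)"
  proof (cases "p j \<in> U")
    case False thus ?thesis using red U unfolding reduced_def by blast
  next
    case True
    obtain i where i: "j \<le> i" "i < Suc K" "p i \<in> U" "p (Suc i) \<notin> U"
      using step_down[of "\<lambda>i. p i \<in> U" j "Suc K"] U True j by auto
    have i1: "1 \<le> i" "i \<le> K" using i j by auto
    have "dv H (ind U) (p i) = ind U (p (i-1)) + ind U (p (Suc i)) - 2 * ind U (p i)"
      using dv_interior[OF i1] .
    hence "dv H (ind U) (p i) \<le> -1" using i unfolding ind_def by auto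
    moreover have "C (p i) = 0" using z i by auto
    ultimately have "C (p i) + dv H (ind U) (p i) < 0" by linarith
    thus ?thesis unfolding effective_def by (meson not_le)
  qed
qed

lemma path_lemma:
  assumes j: "1 \<le> j" "j \<le> K" and Q: "Q \<in> Div H"
    and A: "ex_eff H (\<lambda>w. Q w - ind {p 0} w)"
    and B: "ex_eff H (\<lambda>w. Q w - ind {p (Suc K)} w)"
  shows "ex_eff H (\<lambda>w. Q w - ind {p j} w)"
proof -
  have p0: "p 0 \<in> verts H" and pK: "p (Suc K) \<in> verts H" and pj: "p j \<in> verts H" using pV j by auto
  obtain a where a: "\<forall>w. 0 \<le> Q w - ind {p 0} w + dv H a w"
    using A ex_eff_simp[OF Div_minus_ind[OF Q p0]] by auto
  have "\<forall>w. 0 \<le> Q w + dv H a w"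
  proof
    fix w have "0 \<le> ind {p 0} w" unfolding ind_def by simp
    thus "0 \<le> Q w + dv H a w" using a[rule_format, of w] by linarith
  qed
  hence "ex_eff H Q" using ex_eff_simp[OF Q] by auto
  from reduced_exists[OF wf con pj Q this] obtain C c0 where
    red: "reduced H (p j) C" and C: "\<forall>w. C w = Q w + dv H c0 w" by auto
  have C0: "\<forall>w. 0 \<le> C w" using red unfolding reduced_def effective_def by auto
  show ?thesis
  proof (cases "1 \<le> C (p j)")
    case True
    have "\<forall>w. 0 \<le> Q w - ind {p j} w + dv H c0 w"
    proof
      fix w show "0 \<le> Q w - ind {p j} w + dv H c0 w"
        using True C[rule_format, of w] C0[rule_format, of w] unfolding ind_def by (cases "w = p j") auto
    qed
    thus ?thesis using ex_eff_simp[OF Div_minus_ind[OF Q pj]] by auto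
  next
    case False
    hence Cj: "C (p j) = 0" using C0[rule_format, of "p j"] by linarith
    show ?thesis
    proof (cases "\<exists>ia<j. 1 \<le> C (p ia)")
      case L: True
      then obtain ia where ia: "ia < j" "1 \<le> C (p ia)" by auto
      show ?thesis
      proof (cases "\<exists>ib. j < ib \<and> ib \<le> Suc K \<and> 1 \<le> C (p ib)")
        case True
        then obtain ib where "j < ib" "ib \<le> Suc K" "1 \<le> C (p ib)" by auto
        from fire_mid[OF red j ia(1) this(1,2) ia(2) this(3)] show ?thesis ..
      next
        case False
        have rz: "\<forall>i. j \<le> i \<and> i \<le> Suc K \<longrightarrow> C (p i) = 0"
        proof (intro allI impI)
          fix i assume i: "j \<le> i \<and> i \<le> Suc K"
          show "C (p i) = 0"
          proof (cases "i = j")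
            case True thus ?thesis using Cj by simp
          next
            case False thus ?thesis using \<open>\<not> (\<exists>ib. j < ib \<and> ib \<le> Suc K \<and> 1 \<le> C (p ib))\<close> i C0[rule_format, of "p i"] by force
          qed
        qed
        from right_zero[OF red j this] have "reduced H (p (Suc K)) C" .
        from no_chip[OF wf pK this _ C Q B] rz j show ?thesis by auto
      qed
    next
      case False
      have "\<forall>i\<le>j. C (p i) = 0"
      proof (intro allI impI)
        fix i assume i: "i \<le> j"
        show "C (p i) = 0"
        proof (cases "i = j")
          case True thus ?thesis using Cj by simp
        next
          case False
          hence "i < j" using i by simp
          hence "\<not> 1 \<le> C (p i)" using \<open>\<not> (\<exists>ia<j. 1 \<le> C (p ia))\<close> by blast
          thus ?thesis using C0[rule_format, of "p i"] by linarith
        qed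
      qed
      from left_zero[OF red j this] have "reduced H (p 0) C" .
      from no_chip[OF wf p0 this _ C Q A] \<open>\<forall>i\<le>j. C (p i) = 0\<close> show ?thesis by auto
    qed
  qed
qed

end




locale subd =
  fixes G :: "('v,'e) mgraph" and K :: "'e \<Rightarrow> nat"
  assumes wfG: "wf_graph G"
begin

abbreviation "G' \<equiv> subdivide G K"
abbreviation "sp \<equiv> sub_pt G K"

lemma finV: "finite (verts G)" and finE: "finite (edges G)"
  and inV: "\<And>e. e \<in> edges G \<Longrightarrow> fst (ends G e) \<in> verts G \<and> snd (ends G e) \<in> verts G"
  using wfG unfolding wf_graph_def by auto

lemma verts': "verts G' = Inl ` verts G \<union> {Inr (e,i) | e i. e \<in> edges G \<and> 1 \<le> i \<and> i \<le> K e}"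
  by (simp add: subdivide_def)
lemma edges': "edges G' = Sigma (edges G) (\<lambda>e. {..K e})"
  by (auto simp: subdivide_def)
lemma ends': "ends G' (e,i) = (sp e i, sp e (Suc i))"
  by (simp add: subdivide_def)
lemma Inl_in: "Inl u \<in> verts G' \<longleftrightarrow> u \<in> verts G"
  by (auto simp: verts')
lemma Inr_in: "Inr (e,i) \<in> verts G' \<longleftrightarrow> e \<in> edges G \<and> 1 \<le> i \<and> i \<le> K e"
  by (auto simp: verts')
lemma sp0: "sp e 0 = Inl (fst (ends G e))" by (simp add: sub_pt_def)
lemma spK: "sp e (Suc (K e)) = Inl (snd (ends G e))" by (simp add: sub_pt_def)
lemma spi: "1 \<le> i \<Longrightarrow> i \<le> K e \<Longrightarrow> sp e i = Inr (e,i)" by (simp add: sub_pt_def)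
lemma sp_in: "e \<in> edges G \<Longrightarrow> i \<le> Suc (K e) \<Longrightarrow> sp e i \<in> verts G'"
  using inV[of e] by (auto simp: sub_pt_def verts' le_Suc_eq)

lemma finE': "finite (edges G')" unfolding edges' using finE by auto
lemma finV': "finite (verts G')"
proof -
  have "{Inr (e,i) | e i. e \<in> edges G \<and> 1 \<le> i \<and> i \<le> K e} \<subseteq> Inr ` (Sigma (edges G) (\<lambda>e. {..K e}))"
    by auto
  moreover have "finite (Inr ` (Sigma (edges G) (\<lambda>e. {..K e})))" using finE by auto
  ultimately have "finite {Inr (e,i) | e i. e \<in> edges G \<and> 1 \<le> i \<and> i \<le> K e}" by (rule finite_subset)
  thus ?thesis unfolding verts' using finV by blast
qed

lemma wf': "wf_graph G'"
  unfolding wf_graph_def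
proof (intro conjI finV' finE' ballI)
  fix x assume x: "x \<in> edges G'"
  obtain e i where x': "x = (e,i)" by force
  have e: "e \<in> edges G" and i: "i \<le> K e" using x x' by (auto simp: edges')
  show "fst (ends G' x) \<in> verts G'" "snd (ends G' x) \<in> verts G'"
    unfolding x' ends' fst_conv snd_conv using sp_in[OF e] i by auto
qed

lemma dv'_Inl:
  assumes u: "u \<in> verts G"
  shows "dv G' c (Inl u) = (\<Sum>e\<in>edges G. (if fst (ends G e) = u then c (sp e 1) - c (Inl u) else 0)
                + (if snd (ends G e) = u then c (sp e (K e)) - c (Inl u) else 0))"
proof -
  have "dv G' c (Inl u) = (\<Sum>x\<in>Sigma (edges G) (\<lambda>e. {..K e}). et G' c (Inl u) x)"
    using dv_formula[OF wf' Inl_in[THEN iffD2, OF u]] edges' by simp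
  also have "\<dots> = (\<Sum>e\<in>edges G. \<Sum>i\<in>{..K e}. et G' c (Inl u) (e,i))"
    using finE by (simp add: sum.Sigma)
  also have "\<dots> = (\<Sum>e\<in>edges G. (if fst (ends G e) = u then c (sp e 1) - c (Inl u) else 0)
                + (if snd (ends G e) = u then c (sp e (K e)) - c (Inl u) else 0))"
  proof (rule sum.cong[OF refl])
    fix e assume e: "e \<in> edges G"
    have "(\<Sum>i\<in>{..K e}. et G' c (Inl u) (e,i)) = (\<Sum>i\<in>{..K e}.
        (if i = 0 then (if fst (ends G e) = u then c (sp e 1) - c (Inl u) else 0) else 0)
      + (if i = K e then (if snd (ends G e) = u then c (sp e (K e)) - c (Inl u) else 0) else 0))"
    proof (rule sum.cong[OF refl])
      fix i assume i: "i \<in> {..K e}"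
      have a: "sp e i = Inl u \<longleftrightarrow> i = 0 \<and> fst (ends G e) = u" using i by (auto simp: sub_pt_def)
      have b: "sp e (Suc i) = Inl u \<longleftrightarrow> i = K e \<and> snd (ends G e) = u" using i by (auto simp: sub_pt_def)
      show "et G' c (Inl u) (e,i) = (if i = 0 then (if fst (ends G e) = u then c (sp e 1) - c (Inl u) else 0) else 0)
      + (if i = K e then (if snd (ends G e) = u then c (sp e (K e)) - c (Inl u) else 0) else 0)"
        unfolding et_def ends' fst_conv snd_conv using a b by auto
    qed
    also have "\<dots> = (if fst (ends G e) = u then c (sp e 1) - c (Inl u) else 0)
                + (if snd (ends G e) = u then c (sp e (K e)) - c (Inl u) else 0)"
      by (simp add: sum.distrib)
    finally show "(\<Sum>i\<in>{..K e}. et G' c (Inl u) (e,i)) = \<dots>" .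
  qed
  finally show ?thesis .
qed

lemma spa: "i \<le> K e' \<Longrightarrow> 1 \<le> j \<Longrightarrow> j \<le> K e \<Longrightarrow> sp e' i = Inr (e,j) \<longleftrightarrow> (e',i) = (e,j)"
  by (auto simp: sub_pt_def)
lemma spb: "i \<le> K e' \<Longrightarrow> 1 \<le> j \<Longrightarrow> j \<le> K e \<Longrightarrow> sp e' (Suc i) = Inr (e,j) \<longleftrightarrow> (e',i) = (e,j-1)"
  by (auto simp: sub_pt_def)

lemma dv'_Inr:
  assumes e: "e \<in> edges G" and j: "1 \<le> j" "j \<le> K e"
  shows "dv G' c (Inr (e,j)) = c (sp e (j-1)) + c (sp e (Suc j)) - 2 * c (Inr (e,j))"
proof -
  have wV: "Inr (e,j) \<in> verts G'" using Inr_in e j by auto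
  have "dv G' c (Inr (e,j)) = (\<Sum>x\<in>edges G'. (if x = (e,j) then c (sp e (Suc j)) - c (Inr (e,j)) else 0)
       + (if x = (e, j-1) then c (sp e (j-1)) - c (Inr (e,j)) else 0))"
    unfolding dv_formula[OF wf' wV]
  proof (rule sum.cong[OF refl])
    fix x assume x: "x \<in> edges G'"
    obtain e' i where x': "x = (e',i)" by force
    have i: "i \<le> K e'" using x x' by (auto simp: edges')
    have a: "sp e' i = Inr (e,j) \<longleftrightarrow> x = (e,j)" using spa[OF i j] x' by simp
    have b: "sp e' (Suc i) = Inr (e,j) \<longleftrightarrow> x = (e,j-1)" using spb[OF i j] x' by simp
    have et: "et G' c (Inr (e,j)) x = (if sp e' i = Inr (e,j) then c (sp e' (Suc i)) - c (Inr (e,j)) else 0)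
       + (if sp e' (Suc i) = Inr (e,j) then c (sp e' i) - c (Inr (e,j)) else 0)"
      unfolding et_def x' ends' fst_conv snd_conv ..
    show "et G' c (Inr (e,j)) x = (if x = (e,j) then c (sp e (Suc j)) - c (Inr (e,j)) else 0)
       + (if x = (e, j-1) then c (sp e (j-1)) - c (Inr (e,j)) else 0)"
      unfolding et a b using x' by (cases "x = (e,j)"; cases "x = (e,j-1)") auto
  qed
  also have "\<dots> = (c (sp e (Suc j)) - c (Inr (e,j))) + (c (sp e (j-1)) - c (Inr (e,j)))"
  proof -
    have mem: "(e,j) \<in> edges G'" "(e,j-1) \<in> edges G'" using e j by (auto simp: edges')
    show ?thesis by (simp only: sum.distrib sum.delta[OF finE'] mem if_True)
  qed
  finally show ?thesis by linarith
qed

end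




lemma convex_seq:
  fixes h :: "nat \<Rightarrow> int"
  assumes cv: "\<And>i. 1 \<le> i \<Longrightarrow> i \<le> K \<Longrightarrow> 0 \<le> h (i-1) + h (Suc i) - 2 * h i"
  shows "(int K + 1) * (h 1 - h 0) \<le> h (Suc K) - h 0"
    and "(int K + 1) * (h K - h (Suc K)) \<le> h 0 - h (Suc K)"
proof -
  define d where "d i = h (Suc i) - h i" for i
  have step: "d i \<le> d (Suc i)" if "Suc i \<le> K" for i
    using cv[of "Suc i"] that unfolding d_def by simp
  have mono: "d i \<le> d i'" if "i \<le> i'" "i' \<le> K" for i i'
    using that
  proof (induction i')
    case 0 thus ?case by simp
  next
    case (Suc i')
    show ?case
    proof (cases "i = Suc i'")
      case True thus ?thesis by simp
    next
      case False
      hence "d i \<le> d i'" using Suc by simp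
      thus ?thesis using step[of i'] Suc by simp
    qed
  qed
  have tel: "(\<Sum>i<Suc K. d i) = h (Suc K) - h 0"
    unfolding d_def by (rule sum_lessThan_telescope)
  have "(\<Sum>i<Suc K. d 0) \<le> (\<Sum>i<Suc K. d i)" by (rule sum_mono) (use mono in auto)
  moreover have "(\<Sum>i<Suc K. d 0) = (int K + 1) * d 0" by (simp add: algebra_simps)
  ultimately have "(int K + 1) * d 0 \<le> h (Suc K) - h 0" using tel by linarith
  thus "(int K + 1) * (h 1 - h 0) \<le> h (Suc K) - h 0" unfolding d_def by simp
  have "(\<Sum>i<Suc K. d i) \<le> (\<Sum>i<Suc K. d K)" by (rule sum_mono) (use mono in auto)
  moreover have "(\<Sum>i<Suc K. d K) = (int K + 1) * d K" by (simp add: algebra_simps)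
  ultimately have "h (Suc K) - h 0 \<le> (int K + 1) * d K" using tel by linarith
  thus "(int K + 1) * (h K - h (Suc K)) \<le> h 0 - h (Suc K)" unfolding d_def by (simp add: algebra_simps)
qed

lemma rtranclp_sym:
  assumes "r\<^sup>*\<^sup>* x y" "\<And>a b. r a b \<Longrightarrow> r b a" shows "r\<^sup>*\<^sup>* y x"
  using assms(1)
proof (induction rule: rtranclp_induct)
  case base thus ?case by simp
next
  case (step y z) thus ?case using assms(2) by (meson converse_rtranclp_into_rtranclp)
qed

lemma adj_sym: "adj H a b \<Longrightarrow> adj H b a" unfolding adj_def by auto

context subd begin

lemma csp:
  assumes hl: "c' (Inl (snd (ends G e))) = c' (Inl (fst (ends G e))) + (int (K e) + 1) * s"
    and hr: "\<And>i. 1 \<le> i \<Longrightarrow> i \<le> K e \<Longrightarrow> c' (Inr (e,i)) = c' (Inl (fst (ends G e))) + int i * s"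
    and i: "i \<le> Suc (K e)"
  shows "c' (sp e i) = c' (Inl (fst (ends G e))) + int i * s"
proof -
  consider "i = 0" | "i = Suc (K e)" | "1 \<le> i \<and> i \<le> K e" using i by linarith
  thus ?thesis
  proof cases
    case 1 thus ?thesis by (simp add: sp0)
  next
    case 2 thus ?thesis using hl by (simp add: spK algebra_simps)
  next
    case 3 thus ?thesis using hr by (simp add: spi)
  qed
qed

lemma lift:
  assumes hl: "\<And>e. e \<in> edges G \<Longrightarrow> c' (Inl (snd (ends G e))) = c' (Inl (fst (ends G e)))
                   + (int (K e) + 1) * (g (snd (ends G e)) - g (fst (ends G e)))"
    and hr: "\<And>e i. e \<in> edges G \<Longrightarrow> 1 \<le> i \<Longrightarrow> i \<le> K e \<Longrightarrow> c' (Inr (e,i)) = c' (Inl (fst (ends G e)))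
                   + int i * (g (snd (ends G e)) - g (fst (ends G e)))"
  shows "sigma_star (dv G g) x = dv G' c' x"
proof -
  define s where "s e = g (snd (ends G e)) - g (fst (ends G e))" for e
  have cs: "c' (sp e i) = c' (Inl (fst (ends G e))) + int i * s e" if "e \<in> edges G" "i \<le> Suc (K e)" for e i
    using csp[OF hl[OF that(1)] hr[OF that(1)] that(2)] unfolding s_def by simp
  show ?thesis
  proof (cases x)
    case (Inl u)
    show ?thesis
    proof (cases "u \<in> verts G")
      case False
      thus ?thesis using Inl dv_out[of u G] dv_out[of "Inl u" G'] Inl_in by (simp add: sigma_star_def)
    next
      case True
      have "sigma_star (dv G g) x = (\<Sum>e\<in>edges G. et G g u e)"
        using Inl dv_formula[OF wfG True] by (simp add: sigma_star_def)
      also have "\<dots> = dv G' c' x" unfolding Inl dv'_Inl[OF True]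
      proof (rule sum.cong[OF refl])
        fix e assume e: "e \<in> edges G"
        have c1: "c' (sp e 1) = c' (Inl (fst (ends G e))) + s e" using cs[OF e, of 1] by simp
        have cK: "c' (sp e (K e)) = c' (Inl (snd (ends G e))) - s e"
          using cs[OF e, of "K e"] hl[OF e] unfolding s_def by (simp add: algebra_simps)
        show "et G g u e = (if fst (ends G e) = u then c' (sp e 1) - c' (Inl u) else 0) +
             (if snd (ends G e) = u then c' (sp e (K e)) - c' (Inl u) else 0)"
          unfolding et_def c1 cK s_def by auto
      qed
      finally show ?thesis .
    qed
  next
    case (Inr y)
    obtain e i where y: "y = (e,i)" by force
    show ?thesis
    proof (cases "Inr (e,i) \<in> verts G'")
      case False thus ?thesis using Inr y dv_out[OF False] by (simp add: sigma_star_def)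
    next
      case True
      hence e: "e \<in> edges G" and i: "1 \<le> i" "i \<le> K e" using Inr_in by auto
      have "dv G' c' (Inr (e,i)) = c' (sp e (i-1)) + c' (sp e (Suc i)) - 2 * c' (sp e i)"
        using dv'_Inr[OF e i] spi[OF i] by simp
      also have "\<dots> = 0" using cs[OF e, of "i-1"] cs[OF e, of "Suc i"] cs[OF e, of i] i
        by (simp add: algebra_simps of_nat_diff)
      finally show ?thesis using Inr y by (simp add: sigma_star_def)
    qed
  qed
qed

lemma push_down:
  assumes F: "F \<in> Div G" and eff: "\<forall>x. 0 \<le> sigma_star F x + dv G' f x"
    and hg1: "\<And>e s. e \<in> edges G \<Longrightarrow> (int (K e) + 1) * s \<le> f (Inl (snd (ends G e))) - f (Inl (fst (ends G e)))
                \<Longrightarrow> s \<le> g (snd (ends G e)) - g (fst (ends G e))"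
    and hg2: "\<And>e s. e \<in> edges G \<Longrightarrow> (int (K e) + 1) * s \<le> f (Inl (fst (ends G e))) - f (Inl (snd (ends G e)))
                \<Longrightarrow> s \<le> g (fst (ends G e)) - g (snd (ends G e))"
  shows "0 \<le> F u + dv G g u"
proof (cases "u \<in> verts G")
  case False thus ?thesis using F dv_out[of u G] unfolding Div_def by simp
next
  case True
  have e0: "0 \<le> F u + dv G' f (Inl u)" using eff[rule_format, of "Inl u"] by (simp add: sigma_star_def)
  have "dv G' f (Inl u) \<le> dv G g u" unfolding dv'_Inl[OF True] dv_formula[OF wfG True]
  proof (rule sum_mono)
    fix e assume e: "e \<in> edges G"
    define h where "h i = f (sp e i)" for i
    have cv: "0 \<le> h (i-1) + h (Suc i) - 2 * h i" if "1 \<le> i" "i \<le> K e" for i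
    proof -
      have "0 \<le> sigma_star F (Inr (e,i)) + dv G' f (Inr (e,i))" using eff by blast
      thus ?thesis using dv'_Inr[OF e that] spi[OF that] unfolding h_def by (simp add: sigma_star_def)
    qed
    note c = convex_seq[of "K e" h, OF cv]
    have h0: "h 0 = f (Inl (fst (ends G e)))" and hK: "h (Suc (K e)) = f (Inl (snd (ends G e)))"
      unfolding h_def by (simp_all add: sp0 spK)
    have a: "f (sp e 1) - f (Inl (fst (ends G e))) \<le> g (snd (ends G e)) - g (fst (ends G e))"
      using hg1[OF e c(1)[unfolded h0 hK]] unfolding h_def by simp
    have b: "f (sp e (K e)) - f (Inl (snd (ends G e))) \<le> g (fst (ends G e)) - g (snd (ends G e))"
      using hg2[OF e c(2)[unfolded h0 hK]] unfolding h_def by simp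
    show "(if fst (ends G e) = u then f (sp e 1) - f (Inl u) else 0) +
          (if snd (ends G e) = u then f (sp e (K e)) - f (Inl u) else 0) \<le> et G g u e"
      unfolding et_def using a b by auto
  qed
  thus ?thesis using e0 by linarith
qed

lemma path_reach: "e \<in> edges G \<Longrightarrow> i \<le> Suc (K e) \<Longrightarrow> (adj G')\<^sup>*\<^sup>* (sp e 0) (sp e i)"
proof (induction i)
  case 0 thus ?case by simp
next
  case (Suc i)
  have "(e,i) \<in> edges G'" using Suc.prems by (auto simp: edges')
  hence "adj G' (sp e i) (sp e (Suc i))" unfolding adj_def using ends' by blast
  thus ?case using Suc by (meson Suc_leD rtranclp.rtrancl_into_rtrancl)
qed

lemma conn':
  assumes con: "connected_graph G"
  shows "connected_graph G'"
proof -
  obtain u0 where u0: "u0 \<in> verts G" using con unfolding connected_graph_def by auto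
  have lift_adj: "(adj G')\<^sup>*\<^sup>* (Inl a) (Inl b)" if ab: "adj G a b" for a b
  proof -
    obtain e where e: "e \<in> edges G" "ends G e = (a,b) \<or> ends G e = (b,a)" using ab unfolding adj_def by blast
    have r: "(adj G')\<^sup>*\<^sup>* (sp e 0) (sp e (Suc (K e)))" using path_reach[OF e(1)] by simp
    hence r': "(adj G')\<^sup>*\<^sup>* (Inl (fst (ends G e))) (Inl (snd (ends G e)))" by (simp add: sp0 spK)
    show ?thesis using e(2)
    proof
      assume "ends G e = (a,b)" thus ?thesis using r' by simp
    next
      assume "ends G e = (b,a)" thus ?thesis using rtranclp_sym[OF r' adj_sym] by simp
    qed
  qed
  have lift_star: "(adj G')\<^sup>*\<^sup>* (Inl a) (Inl b)" if "(adj G)\<^sup>*\<^sup>* a b" for a b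
    using that
  proof (induction rule: rtranclp_induct)
    case base thus ?case by simp
  next
    case (step y z) thus ?case using lift_adj by (meson rtranclp_trans)
  qed
  have reach: "(adj G')\<^sup>*\<^sup>* (Inl u0) x" if x: "x \<in> verts G'" for x
  proof -
    obtain a where a: "a \<in> verts G" "(adj G')\<^sup>*\<^sup>* (Inl a) x"
    proof (cases x)
      case (Inl u) thus ?thesis using that x Inl_in by blast
    next
      case (Inr y)
      obtain e i where y: "y = (e,i)" by force
      have e: "e \<in> edges G" and i: "1 \<le> i" "i \<le> K e" using x Inr y Inr_in by auto
      have "(adj G')\<^sup>*\<^sup>* (sp e 0) (sp e i)" using path_reach[OF e] i by simp
      hence "(adj G')\<^sup>*\<^sup>* (Inl (fst (ends G e))) x" using Inr y spi[OF i] sp0 by simp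
      thus ?thesis using that inV[OF e] by blast
    qed
    have "(adj G)\<^sup>*\<^sup>* u0 a" using con u0 a(1) unfolding connected_graph_def by auto
    thus ?thesis using lift_star a(2) by (meson rtranclp_trans)
  qed
  show ?thesis unfolding connected_graph_def
  proof (intro conjI ballI)
    show "verts G' \<noteq> {}" using u0 Inl_in by blast
    fix x y assume "x \<in> verts G'" "y \<in> verts G'"
    thus "(adj G')\<^sup>*\<^sup>* x y" using reach rtranclp_sym[OF reach adj_sym] by (meson rtranclp_trans)
  qed
qed

lemma gpath_inst:
  assumes con: "connected_graph G" and e: "e \<in> edges G" and ne: "fst (ends G e) \<noteq> snd (ends G e)"
  shows "gpath G' (sp e) (\<lambda>i. (e,i)) (K e)"
proof
  show "wf_graph G'" by (rule wf')
  show "connected_graph G'" by (rule conn'[OF con])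
  show "\<And>i. i \<le> Suc (K e) \<Longrightarrow> sp e i \<in> verts G'" using sp_in[OF e] .
  show "inj_on (sp e) {0..Suc (K e)}"
    unfolding inj_on_def using ne by (auto simp: sub_pt_def split: if_splits)
  show "\<And>i. i \<le> K e \<Longrightarrow> (e, i) \<in> edges G'" using e by (auto simp: edges')
  show "\<And>i. i \<le> K e \<Longrightarrow> ends G' (e, i) = (sp e i, sp e (Suc i)) \<or> ends G' (e, i) = (sp e (Suc i), sp e i)"
    by (simp add: ends')
  fix i x assume i: "1 \<le> i" "i \<le> K e" and x: "x \<in> edges G'" and inc: "fst (ends G' x) = sp e i \<or> snd (ends G' x) = sp e i"
  obtain e' i' where x': "x = (e',i')" by force
  have i': "i' \<le> K e'" using x x' by (auto simp: edges')
  have "sp e i = Inr (e,i)" using spi[OF i] .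
  hence "(e',i') = (e,i) \<or> (e',i') = (e,i-1)" using inc spa[OF i' i] spb[OF i' i] unfolding x' ends' by auto
  thus "x = (e, i - 1) \<or> x = (e, i)" using x' by auto
qed

end




lemma floor_diff:
  fixes N s X Y :: int
  assumes N: "0 < N" and h: "N * s \<le> X - Y"
  shows "s \<le> X div N - Y div N"
proof -
  have x: "X = N * (X div N) + X mod N" and y: "Y = N * (Y div N) + Y mod N" by simp_all
  have m: "0 \<le> X mod N" "X mod N < N" "0 \<le> Y mod N" "Y mod N < N" using N by simp_all
  have e1: "N * s \<le> N * (X div N) + X mod N - (N * (Y div N) + Y mod N)" using h x y by linarith
  have e2: "N * (X div N - Y div N + 1) = N * (X div N) - N * (Y div N) + N" by (simp add: algebra_simps)
  have "N * s < N * (X div N - Y div N + 1)" using e1 e2 m by linarith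
  hence "s < X div N - Y div N + 1" using N by (simp add: mult_less_cancel_left_pos)
  thus ?thesis by simp
qed

lemma deg_ind: "finite (verts H) \<Longrightarrow> x \<in> verts H \<Longrightarrow> deg H (ind {x}) = 1"
  unfolding deg_def ind_def by simp

lemma sigma_Div: "F \<in> Div G \<Longrightarrow> (sigma_star F :: 'v + 'e \<times> nat \<Rightarrow> int) \<in> Div (subdivide G K)"
  unfolding Div_def sigma_star_def by (auto simp: subdivide_def split: sum.splits)

locale wsub = subd G K for G :: "('v,'e) mgraph" and K +
  fixes v :: 'v and V1 V2 :: "'v set" and E1 E2 :: "'e set" and m n :: nat
  assumes con: "connected_graph G"
    and wd: "wedge_decomp G v V1 E1 V2 E2"
    and Kdef: "K = (\<lambda>e. if e \<in> E1 then m else n)"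
begin

lemma wd_facts: "V1 \<union> V2 = verts G" "V1 \<inter> V2 = {v}" "E1 \<union> E2 = edges G" "E1 \<inter> E2 = {}"
  "\<And>e. e \<in> E1 \<Longrightarrow> fst (ends G e) \<in> V1 \<and> snd (ends G e) \<in> V1"
  "\<And>e. e \<in> E2 \<Longrightarrow> fst (ends G e) \<in> V2 \<and> snd (ends G e) \<in> V2"
  using wd unfolding wedge_decomp_def wf_graph_def subgraph_on_def by auto

definition N :: "'v \<Rightarrow> int" where "N u = (if u \<in> V1 then int m + 1 else int n + 1)"

lemma N_V2: "u \<in> V2 \<Longrightarrow> N u * (x u - x v) = (int n + 1) * (x u - x v)"
  using wd_facts(2) unfolding N_def by auto

lemma N_edge: "e \<in> edges G \<Longrightarrow> w = fst (ends G e) \<or> w = snd (ends G e) \<Longrightarrow>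
    N w * (x w - x v) = (int (K e) + 1) * (x w - x v)"
proof -
  assume e: "e \<in> edges G" and w: "w = fst (ends G e) \<or> w = snd (ends G e)"
  show ?thesis
  proof (cases "e \<in> E1")
    case True thus ?thesis using wd_facts(5)[OF True] w unfolding N_def Kdef by auto
  next
    case False
    hence "e \<in> E2" using e wd_facts(3) by auto
    hence "w \<in> V2" using wd_facts(6) w by auto
    thus ?thesis using N_V2 False unfolding Kdef by simp
  qed
qed

lemma L1: "\<exists>c'. \<forall>x. sigma_star (dv G c) x = dv G' c' x"
proof -
  define c' where "c' x = (case x of Inl u \<Rightarrow> N u * (c u - c v)
      | Inr (e,i) \<Rightarrow> N (fst (ends G e)) * (c (fst (ends G e)) - c v) + int i * (c (snd (ends G e)) - c (fst (ends G e))))" for x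
  have "sigma_star (dv G c) x = dv G' c' x" for x
  proof (rule lift)
    fix e assume e: "e \<in> edges G"
    show "c' (Inl (snd (ends G e))) = c' (Inl (fst (ends G e))) + (int (K e) + 1) * (c (snd (ends G e)) - c (fst (ends G e)))"
      unfolding c'_def using N_edge[OF e, of "fst (ends G e)" c] N_edge[OF e, of "snd (ends G e)" c]
      by (simp add: algebra_simps)
    fix i assume "1 \<le> i" "i \<le> K e"
    show "c' (Inr (e,i)) = c' (Inl (fst (ends G e))) + int i * (c (snd (ends G e)) - c (fst (ends G e)))"
      unfolding c'_def by simp
  qed
  thus ?thesis by blast
qed

lemma A: assumes F: "F \<in> Div G" shows "ex_eff G F \<longleftrightarrow> ex_eff G' (sigma_star F)"
proof
  assume "ex_eff G F"
  then obtain c where c: "\<forall>x. 0 \<le> F x + dv G c x" using ex_eff_simp[OF F] by auto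
  obtain c' where c': "\<forall>x. sigma_star (dv G c) x = dv G' c' x" using L1 by blast
  have "\<forall>x. 0 \<le> sigma_star F x + dv G' c' x"
  proof
    fix x show "0 \<le> sigma_star F x + dv G' c' x"
      using c c'[rule_format, of x, symmetric] by (cases x) (auto simp: sigma_star_def)
  qed
  thus "ex_eff G' (sigma_star F)" using ex_eff_simp[OF sigma_Div[OF F]] by blast
next
  assume "ex_eff G' (sigma_star F)"
  then obtain f where f: "\<forall>x. 0 \<le> sigma_star F x + dv G' f x" using ex_eff_simp[OF sigma_Div[OF F]] by auto
  define g where "g u = (f (Inl u) - f (Inl v)) div N u" for u
  have gK: "g w = (f (Inl w) - f (Inl v)) div (int (K e) + 1)"
    if e: "e \<in> edges G" and w: "w = fst (ends G e) \<or> w = snd (ends G e)" for e w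
  proof -
    have Npos: "0 < N w" unfolding N_def by auto
    show ?thesis
    proof (cases "w = v")
      case True thus ?thesis unfolding g_def by simp
    next
      case False
      have "N w * (1 - (if w = v then 1 else 0)) = (int (K e) + 1) * (1 - (if w = v then 1 else 0))"
        using N_edge[OF e w, of "\<lambda>u. if u = v then 0 else 1"] False by simp
      hence "N w = int (K e) + 1" using False by simp
      thus ?thesis unfolding g_def by simp
    qed
  qed
  have "0 \<le> F u + dv G g u" for u
  proof (rule push_down[OF F f])
    fix e s assume e: "e \<in> edges G"
      and h: "(int (K e) + 1) * s \<le> f (Inl (snd (ends G e))) - f (Inl (fst (ends G e)))"
    have "(int (K e) + 1) * s \<le> (f (Inl (snd (ends G e))) - f (Inl v)) - (f (Inl (fst (ends G e))) - f (Inl v))"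
      using h by simp
    from floor_diff[OF _ this] show "s \<le> g (snd (ends G e)) - g (fst (ends G e))"
      using gK[OF e] by simp
  next
    fix e s assume e: "e \<in> edges G"
      and h: "(int (K e) + 1) * s \<le> f (Inl (fst (ends G e))) - f (Inl (snd (ends G e)))"
    have "(int (K e) + 1) * s \<le> (f (Inl (fst (ends G e))) - f (Inl v)) - (f (Inl (snd (ends G e))) - f (Inl v))"
      using h by simp
    from floor_diff[OF _ this] show "s \<le> g (fst (ends G e)) - g (snd (ends G e))"
      using gK[OF e] by simp
  qed
  thus "ex_eff G F" using ex_eff_simp[OF F] by blast
qed

end




context wsub begin

lemma deg_supp:
  assumes "\<forall>w. w \<notin> Inl ` verts G \<longrightarrow> X w = 0"
  shows "deg G' X = (\<Sum>u\<in>verts G. X (Inl u))"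
proof -
  have "deg G' X = (\<Sum>w\<in>Inl ` verts G. X w)"
    unfolding deg_def using assms finV' by (intro sum.mono_neutral_right) (auto simp: verts')
  also have "\<dots> = (\<Sum>u\<in>verts G. X (Inl u))" by (simp add: sum.reindex)
  finally show ?thesis .
qed

lemma deg_sigma: assumes F: "F \<in> Div G" shows "deg G' (sigma_star F) = deg G F"
proof -
  have "\<forall>w. w \<notin> Inl ` verts G \<longrightarrow> sigma_star F w = 0"
    using F unfolding Div_def sigma_star_def by (auto split: sum.splits)
  from deg_supp[OF this] show ?thesis unfolding deg_def sigma_star_def by simp
qed

lemma eff_deg0:
  assumes E: "E \<in> Div G'" "effective E" "deg G' E = 0" shows "E w = 0"
proof (cases "w \<in> verts G'")
  case True
  have "\<forall>x\<in>verts G'. E x = 0"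
    using E finV' unfolding deg_def effective_def by (subst sum_nonneg_eq_0_iff[symmetric]) auto
  thus ?thesis using True by auto
next
  case False thus ?thesis using E unfolding Div_def by auto
qed

lemma RD:
  assumes ll: "loopless G"
  shows "Q \<in> Div G' \<Longrightarrow> (\<forall>E\<in>Div G'. effective E \<and> deg G' E = int k \<and> (\<forall>w. w \<notin> Inl ` verts G \<longrightarrow> E w = 0)
           \<longrightarrow> ex_eff G' (\<lambda>w. Q w - E w))
       \<Longrightarrow> (\<forall>E\<in>Div G'. effective E \<and> deg G' E = int k \<longrightarrow> ex_eff G' (\<lambda>w. Q w - E w))"
proof (induction k arbitrary: Q)
  case 0
  show ?case
  proof (intro ballI impI)
    fix E assume E: "E \<in> Div G'" "effective E \<and> deg G' E = int 0"
    hence "\<forall>w. E w = 0" using eff_deg0 by auto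
    thus "ex_eff G' (\<lambda>w. Q w - E w)" using 0 E by auto
  qed
next
  case (Suc k)
  note hyp = Suc.prems(2)
  show ?case
  proof (intro ballI impI)
    fix E assume E: "E \<in> Div G'" "effective E \<and> deg G' E = int (Suc k)"
    have "\<exists>x\<in>verts G'. 1 \<le> E x"
    proof (rule ccontr)
      assume "\<not> ?thesis"
      hence "\<forall>x\<in>verts G'. E x \<le> 0" by auto
      hence "deg G' E \<le> 0" unfolding deg_def by (simp add: sum_nonpos)
      thus False using E by simp
    qed
    then obtain x where x: "x \<in> verts G'" "1 \<le> E x" by auto
    define E1 where "E1 = (\<lambda>w. E w - ind {x} w)"
    define Q1 where "Q1 = (\<lambda>w. Q w - ind {x} w)"
    have E1: "E1 \<in> Div G'" "effective E1" "deg G' E1 = int k"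
    proof -
      show "E1 \<in> Div G'" using E x unfolding E1_def Div_def ind_def by auto
      show "effective E1" using E x unfolding E1_def effective_def ind_def by auto
      show "deg G' E1 = int k" using E unfolding E1_def deg_diff deg_ind[OF finV' x(1)] by simp
    qed
    have Q1: "Q1 \<in> Div G'" unfolding Q1_def by (rule Div_minus_ind[OF Suc.prems(1) x(1)])
    have hyp1: "\<forall>E2\<in>Div G'. effective E2 \<and> deg G' E2 = int k \<and> (\<forall>w. w \<notin> Inl ` verts G \<longrightarrow> E2 w = 0)
           \<longrightarrow> ex_eff G' (\<lambda>w. Q1 w - E2 w)"
    proof (intro ballI impI)
      fix E2 assume E2: "E2 \<in> Div G'" "effective E2 \<and> deg G' E2 = int k \<and> (\<forall>w. w \<notin> Inl ` verts G \<longrightarrow> E2 w = 0)"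
      have add: "ex_eff G' (\<lambda>w. (Q w - E2 w) - ind {y} w)" if y: "y \<in> Inl ` verts G" for y
      proof -
        have yV: "y \<in> verts G'" using y by (auto simp: verts')
        define E3 where "E3 = (\<lambda>w. E2 w + ind {y} w)"
        have "E3 \<in> Div G'" using E2 yV unfolding E3_def Div_def ind_def by auto
        moreover have "effective E3 \<and> deg G' E3 = int (Suc k) \<and> (\<forall>w. w \<notin> Inl ` verts G \<longrightarrow> E3 w = 0)"
          using E2 y unfolding E3_def effective_def deg_add deg_ind[OF finV' yV] by (auto simp: ind_def)
        ultimately have "ex_eff G' (\<lambda>w. Q w - E3 w)" using hyp by blast
        moreover have "(\<lambda>w. Q w - E3 w) = (\<lambda>w. (Q w - E2 w) - ind {y} w)" unfolding E3_def by auto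
        ultimately show ?thesis by simp
      qed
      have QE2: "(\<lambda>w. Q w - E2 w) \<in> Div G'" using Suc.prems(1) E2 unfolding Div_def by auto
      have eqQ: "(\<lambda>w. Q1 w - E2 w) = (\<lambda>w. (Q w - E2 w) - ind {x} w)" unfolding Q1_def by auto
      show "ex_eff G' (\<lambda>w. Q1 w - E2 w)"
      proof (cases "x \<in> Inl ` verts G")
        case True thus ?thesis using add eqQ by simp
      next
        case False
        then obtain e i where xi: "x = Inr (e,i)" using x(1) by (auto simp: verts')
        have e: "e \<in> edges G" and i: "1 \<le> i" "i \<le> K e" using x(1) xi Inr_in by auto
        have ne: "fst (ends G e) \<noteq> snd (ends G e)" using ll e unfolding loopless_def by auto
        interpret gp: gpath G' "sp e" "\<lambda>i. (e,i)" "K e" by (rule gpath_inst[OF con e ne])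
        have a: "ex_eff G' (\<lambda>w. (Q w - E2 w) - ind {sp e 0} w)"
          using add[of "sp e 0"] inV[OF e] by (simp add: sp0)
        have b: "ex_eff G' (\<lambda>w. (Q w - E2 w) - ind {sp e (Suc (K e))} w)"
          using add[of "sp e (Suc (K e))"] inV[OF e] by (simp add: spK)
        have "ex_eff G' (\<lambda>w. (Q w - E2 w) - ind {sp e i} w)"
          by (rule gp.path_lemma[OF i QE2 a b])
        thus ?thesis using eqQ spi[OF i] xi by simp
      qed
    qed
    have "ex_eff G' (\<lambda>w. Q1 w - E1 w)" using Suc.IH[OF Q1 hyp1] E1 by blast
    moreover have "(\<lambda>w. Q1 w - E1 w) = (\<lambda>w. Q w - E w)" unfolding Q1_def E1_def by auto
    ultimately show "ex_eff G' (\<lambda>w. Q w - E w)" by simp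
  qed
qed

lemma rank_eq:
  assumes ll: "loopless G" and D: "D \<in> Div G"
  shows "rank G D = rank G' (sigma_star D)"
proof -
  have sD: "sigma_star D \<in> Div G'" by (rule sigma_Div[OF D])
  have P: "(\<forall>E\<in>Div G. effective E \<and> deg G E = int k \<longrightarrow> ex_eff G (\<lambda>x. D x - E x))
       \<longleftrightarrow> (\<forall>E\<in>Div G'. effective E \<and> deg G' E = int k \<longrightarrow> ex_eff G' (\<lambda>x. sigma_star D x - E x))" for k
  proof
    assume PG: "\<forall>E\<in>Div G. effective E \<and> deg G E = int k \<longrightarrow> ex_eff G (\<lambda>x. D x - E x)"
    show "\<forall>E\<in>Div G'. effective E \<and> deg G' E = int k \<longrightarrow> ex_eff G' (\<lambda>x. sigma_star D x - E x)"
    proof (rule RD[OF ll sD], intro ballI impI)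
      fix E assume E: "E \<in> Div G'" "effective E \<and> deg G' E = int k \<and> (\<forall>w. w \<notin> Inl ` verts G \<longrightarrow> E w = 0)"
      define E0 where "E0 u = E (Inl u)" for u
      have E0: "E0 \<in> Div G" "effective E0" "deg G E0 = int k"
      proof -
        show "E0 \<in> Div G" using E unfolding E0_def Div_def by auto
        show "effective E0" using E unfolding E0_def effective_def by auto
        show "deg G E0 = int k" using E deg_supp[of E] unfolding E0_def deg_def by simp
      qed
      have DE0: "(\<lambda>x. D x - E0 x) \<in> Div G" using D E0 unfolding Div_def by auto
      have "ex_eff G (\<lambda>x. D x - E0 x)" using PG E0 by blast
      hence "ex_eff G' (sigma_star (\<lambda>x. D x - E0 x))" using A[OF DE0] by simp
      moreover have "sigma_star (\<lambda>x. D x - E0 x) = (\<lambda>x. sigma_star D x - E x)"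
      proof
        fix x show "sigma_star (\<lambda>x. D x - E0 x) x = sigma_star D x - E x"
          using E unfolding E0_def sigma_star_def by (cases x) auto
      qed
      ultimately show "ex_eff G' (\<lambda>x. sigma_star D x - E x)" by simp
    qed
  next
    assume PG': "\<forall>E\<in>Div G'. effective E \<and> deg G' E = int k \<longrightarrow> ex_eff G' (\<lambda>x. sigma_star D x - E x)"
    show "\<forall>E\<in>Div G. effective E \<and> deg G E = int k \<longrightarrow> ex_eff G (\<lambda>x. D x - E x)"
    proof (intro ballI impI)
      fix E assume E: "E \<in> Div G" "effective E \<and> deg G E = int k"
      have "sigma_star E \<in> Div G'" "effective (sigma_star E)" "deg G' (sigma_star E) = int k"
        using sigma_Div[OF E(1)] E deg_sigma[OF E(1)] unfolding effective_def sigma_star_def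
        by (auto split: sum.splits)
      hence h1: "ex_eff G' (\<lambda>x. sigma_star D x - sigma_star E x)" using PG' by blast
      have h2: "(\<lambda>x. sigma_star D x - sigma_star E x) = sigma_star (\<lambda>x. D x - E x)"
        unfolding sigma_star_def by (auto split: sum.splits)
      have DE: "(\<lambda>x. D x - E x) \<in> Div G" using D E unfolding Div_def by auto
      have "ex_eff G' (sigma_star (\<lambda>x. D x - E x))" using h1 h2 by metis
      thus "ex_eff G (\<lambda>x. D x - E x)" using A[OF DE] by blast
    qed
  qed
  show ?thesis
    unfolding rank_def ex_eff_def[symmetric] using A[OF D] P by simp
qed

lemma part1: "D \<in> Prin G \<Longrightarrow> sigma_star D \<in> Prin G'"
proof -
  assume "D \<in> Prin G"
  then obtain c where c: "D = dv G c" unfolding Prin_dv by auto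
  obtain c' where "\<forall>x. sigma_star (dv G c) x = dv G' c' x" using L1 by blast
  hence "sigma_star D = dv G' c'" using c by auto
  thus ?thesis unfolding Prin_dv by auto
qed

end



theorem proposition2p6:
  fixes G :: "('v,'e) mgraph" and v :: 'v and V1 V2 :: "'v set" and E1 E2 :: "'e set"
    and m n :: nat
  assumes "wf_graph G" and "connected_graph G"
    and "wedge_decomp G v V1 E1 V2 E2"
  shows "(\<forall>D\<in>Prin G. (sigma_star D :: 'v + 'e \<times> nat \<Rightarrow> int) \<in> Prin (subdiv_mn G E1 m n))
       \<and> (loopless G \<longrightarrow>
            (\<forall>D\<in>Div G. rank G D = rank (subdiv_mn G E1 m n) (sigma_star D)))"
proof -
  interpret W: wsub G "\<lambda>e. if e \<in> E1 then m else n" v V1 V2 E1 E2 m n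
    by unfold_locales (use assms in auto)
  have eq: "subdiv_mn G E1 m n = subdivide G (\<lambda>e. if e \<in> E1 then m else n)"
    by (simp add: subdiv_mn_def)
  show ?thesis unfolding eq using W.part1 W.rank_eq by blast
qed

end
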